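(* Let the type set be a disjoint union $\{1,\dots,V\}=\bigcup_\alpha V_\alpha$ of isomer classes, with internal energies $I_v$, parameters $\nu_v>0$ constant on each class $V_\alpha$, and $\beta>0$. Let $p_v>0$ and assume: (i) binary reaction base rates $b_{\hat\imath\hat\jmath}$, $\hat\imath=(v,w)$, $\hat\jmath=(v',w')$, satisfy $p_vp_wb_{\hat\imath\hat\jmath}=p_{v'}p_{w'}b_{\hat\jmath\hat\imath}$; (ii) unary reaction base rates $b_{vw}$, allowed only for $v,w$ in the same class, satisfy $p_vb_{vw}=p_wb_{wv}$; (iii) for every binary reaction $v,w\to v',w'$, $\nu_v+\nu_w=\nu_{v'}+\nu_{w'}$. With $f_v$, $f_{\hat\imath}$, $a_{vw}(U)$, $a_{\hat\imath\hat\jmath}(U)$ as in the context, set $$\pi_v=p_ve^{-\beta I_v}\beta^{-\nu_v}.$$ Then for every binary reaction $\hat\imath\to\hat\jmath$ and all $U>\max(I_{\hat\imath},I_{\hat\jmath})$, $$\pi_v\pi_wf_{\hat\imath}(U)a_{\hat\imath\hat\jmath}(U)=\pi_{v'}\pi_{w'}f_{\hat\jmath}(U)a_{\hat\jmath\hat\imath}(U),$$ and for every unary reaction $v\to w$ within a class and all $U>\max(I_v,I_w)$, $$\pi_vf_v(U)a_{vw}(U)=\pi_wf_w(U)a_{wv}(U).$$ That is, the factorized distribution with type weights $\pi_v$ and type-$v$ full-energy densities $f_v$ is a reversible invariant distribution for both binary and unary reactions.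
   Context: For a type $v$, $f_v$ is the shifted Gamma density $f_v(U)=\frac{\beta^{\nu_v}}{\Gamma(\nu_v)}(U-I_v)^{\nu_v-1}e^{-\beta(U-I_v)}$ for $U>I_v$ and $0$ otherwise ($U$ = full energy = internal plus kinetic). For a pair $\hat\imath=(v,w)$, $I_{\hat\imath}=I_v+I_w$, $\nu_{\hat\imath}=\nu_v+\nu_w$, and $f_{\hat\imath}=f_v*f_w$ (convolution), the density of the pair's total full energy. Unary rates: $a_{vw}(U)=(U-I_w)^{\nu_w-1}b_{vw}$ if $U\ge I_w$, $0$ otherwise, where $U$ is the full energy of the molecule, which is conserved in the reaction. Binary rates: $a_{\hat\imath\hat\jmath}(U)=(U-I_{\hat\jmath})^{\nu_{\hat\jmath}-1}b_{\hat\imath\hat\jmath}$ if $U\ge I_{\hat\jmath}$, $0$ otherwise, where $U$ is the total full energy of the reacting pair, which is conserved in the reaction. *)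

theory Defs
  imports "HOL-Analysis.Analysis"
begin

definition fdens :: "real \<Rightarrow> ('t \<Rightarrow> real) \<Rightarrow> ('t \<Rightarrow> real) \<Rightarrow> 't \<Rightarrow> real \<Rightarrow> real" where
  "fdens \<beta> I \<nu> v U =
     (if U > I v then \<beta> powr (\<nu> v) / Gamma (\<nu> v) * (U - I v) powr (\<nu> v - 1) * exp (- \<beta> * (U - I v))
      else 0)"

definition fpair :: "real \<Rightarrow> ('t \<Rightarrow> real) \<Rightarrow> ('t \<Rightarrow> real) \<Rightarrow> 't \<times> 't \<Rightarrow> real \<Rightarrow> real" where
  "fpair \<beta> I \<nu> i U = (LINT x|lborel. fdens \<beta> I \<nu> (fst i) x * fdens \<beta> I \<nu> (snd i) (U - x))"

definition Ipair :: "('t \<Rightarrow> real) \<Rightarrow> 't \<times> 't \<Rightarrow> real" where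
  "Ipair I i = I (fst i) + I (snd i)"

definition nupair :: "('t \<Rightarrow> real) \<Rightarrow> 't \<times> 't \<Rightarrow> real" where
  "nupair \<nu> i = \<nu> (fst i) + \<nu> (snd i)"

definition aun :: "('t \<Rightarrow> real) \<Rightarrow> ('t \<Rightarrow> real) \<Rightarrow> ('t \<Rightarrow> 't \<Rightarrow> real) \<Rightarrow> 't \<Rightarrow> 't \<Rightarrow> real \<Rightarrow> real" where
  "aun I \<nu> b v w U = (if U \<ge> I w then (U - I w) powr (\<nu> w - 1) * b v w else 0)"

definition abin :: "('t \<Rightarrow> real) \<Rightarrow> ('t \<Rightarrow> real) \<Rightarrow> ('t \<times> 't \<Rightarrow> 't \<times> 't \<Rightarrow> real)
    \<Rightarrow> 't \<times> 't \<Rightarrow> 't \<times> 't \<Rightarrow> real \<Rightarrow> real" where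
  "abin I \<nu> b i j U = (if U \<ge> Ipair I j then (U - Ipair I j) powr (nupair \<nu> j - 1) * b i j else 0)"

definition piw :: "real \<Rightarrow> ('t \<Rightarrow> real) \<Rightarrow> ('t \<Rightarrow> real) \<Rightarrow> ('t \<Rightarrow> real) \<Rightarrow> 't \<Rightarrow> real" where
  "piw \<beta> I \<nu> p v = p v * exp (- \<beta> * I v) * \<beta> powr (- \<nu> v)"

end

theory Submission
  imports Defs
begin

lemma h_int:
  fixes a b S c :: real
  assumes a: "a > 0" and b: "b > 0" and S: "S > 0"
  shows "((\<lambda>x. (x - c) powr (a - 1) * (c + S - x) powr (b - 1)) has_integral
            S powr (a + b - 1) * Beta a b) {c..c+S}"
proof -
  let ?B = "\<lambda>t::real. t powr (a - 1) * (1 - t) powr (b - 1)"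
  have B: "(?B has_integral Beta a b) (cbox 0 1)"
    using has_integral_Beta_real[OF a b] by simp
  have e: "(S*S+S*c)/S = S+c" using S by (simp add: algebra_simps power2_eq_square[symmetric] divide_simps)
  from has_integral_affinity'[OF B, of "1/S" "-c/S"] S
  have 1: "((\<lambda>x. ?B ((1/S) * x + - c/S)) has_integral (Beta a b * S)) {c..c+S}"
    by (simp add: field_simps e)
  have 2: "((\<lambda>x. (S powr (a-1) * S powr (b-1)) * ?B ((1/S) * x + - c/S)) has_integral
        (S powr (a-1) * S powr (b-1)) * (Beta a b * S)) {c..c+S}"
    by (rule has_integral_mult_right[OF 1])
  have 3: "(S powr (a-1) * S powr (b-1)) * (Beta a b * S) = S powr (a + b - 1) * Beta a b"
  proof -
    have q: "(a-1) + (b-1) + 1 = a + b - 1" by simp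
    have "S powr ((a-1) + (b-1) + 1) = S powr (a-1) * S powr (b-1) * S powr 1" by (simp only: powr_add)
    hence "S powr (a + b - 1) = S powr (a-1) * S powr (b-1) * S" using S by (simp only: q powr_one_gt_zero_iff) simp
    thus ?thesis by simp
  qed
  show ?thesis
  proof (rule has_integral_eq[OF _ 2[unfolded 3]])
    fix x assume x: "x \<in> {c..c+S}"
    have e1: "(1/S) * x + - c/S = (x - c) / S" by (simp add: diff_divide_distrib)
    have e2: "1 - (x - c) / S = (c + S - x) / S" using S by (simp add: field_simps)
    show "S powr (a - 1) * S powr (b - 1) * ?B ((1/S) * x + - c/S) =
        (x - c) powr (a - 1) * (c + S - x) powr (b - 1)"
      unfolding e1 e2 using x S by (simp add: powr_divide)
  qed
qed

lemma conv:
  assumes a: "\<nu> v > 0" and b: "\<nu> w > 0" and beta: "\<beta> > 0" and U: "U > I v + I w"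
  shows "fpair \<beta> I \<nu> (v, w) U = \<beta> powr (\<nu> v + \<nu> w) / Gamma (\<nu> v + \<nu> w)
           * (U - (I v + I w)) powr (\<nu> v + \<nu> w - 1) * exp (- \<beta> * (U - (I v + I w)))"
proof -
  define S where "S = U - (I v + I w)"
  have S: "S > 0" using U by (simp add: S_def)
  define K where "K = \<beta> powr \<nu> v / Gamma (\<nu> v) * (\<beta> powr \<nu> w / Gamma (\<nu> w)) * exp (- \<beta> * S)"
  define h where "h = (\<lambda>x. (x - I v) powr (\<nu> v - 1) * (I v + S - x) powr (\<nu> w - 1))"
  define F where "F = (\<lambda>x. if x \<in> {I v..I v + S} then K * h x else 0)"
  have eqF: "fdens \<beta> I \<nu> v x * fdens \<beta> I \<nu> w (U - x) = F x" for x
  proof -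
    consider "x \<le> I v" | "I v < x" "x < I v + S" | "x \<ge> I v + S" by linarith
    then show ?thesis
    proof cases
      case 1 then show ?thesis by (auto simp: fdens_def F_def h_def)
    next
      case 2
      have ex: "exp (- \<beta> * (x - I v)) * exp (- \<beta> * (U - x - I w)) = exp (- \<beta> * S)"
        by (simp add: S_def exp_add[symmetric] algebra_simps)
      have "U - x - I w = I v + S - x" by (simp add: S_def)
      with 2 ex show ?thesis
        by (simp add: fdens_def F_def h_def K_def S_def algebra_simps)
    next
      case 3 then show ?thesis by (auto simp: fdens_def F_def h_def S_def)
    qed
  qed
  have hi: "(h has_integral S powr (\<nu> v + \<nu> w - 1) * Beta (\<nu> v) (\<nu> w)) {I v..I v+S}"
    unfolding h_def by (rule h_int[OF a b S])
  have Fi: "(F has_integral K * (S powr (\<nu> v + \<nu> w - 1) * Beta (\<nu> v) (\<nu> w))) UNIV"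
    unfolding F_def has_integral_restrict_UNIV by (rule has_integral_mult_right[OF hi])
  have Kpos: "K \<ge> 0" unfolding K_def using beta a b by (simp add: Gamma_real_pos less_imp_le)
  have Fnn: "F x \<ge> 0" for x unfolding F_def h_def using Kpos by auto
  have Fm: "F \<in> borel_measurable borel"
    unfolding F_def h_def by measurable
  have "integral\<^sup>N lborel F = K * (S powr (\<nu> v + \<nu> w - 1) * Beta (\<nu> v) (\<nu> w))"
    by (rule nn_integral_has_integral_lborel[OF Fm Fnn Fi])
  moreover have "K * (S powr (\<nu> v + \<nu> w - 1) * Beta (\<nu> v) (\<nu> w)) \<ge> 0"
    using Kpos a b by (simp add: Beta_def Gamma_real_pos less_imp_le)
  ultimately have "(LINT x|lborel. F x) = K * (S powr (\<nu> v + \<nu> w - 1) * Beta (\<nu> v) (\<nu> w))"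
    using Fm Fnn by (subst integral_eq_nn_integral) auto
  moreover have "fpair \<beta> I \<nu> (v, w) U = (LINT x|lborel. F x)"
    unfolding fpair_def using eqF by simp
  moreover have "K * (S powr (\<nu> v + \<nu> w - 1) * Beta (\<nu> v) (\<nu> w)) =
     \<beta> powr (\<nu> v + \<nu> w) / Gamma (\<nu> v + \<nu> w) * S powr (\<nu> v + \<nu> w - 1) * exp (- \<beta> * S)"
    using a b Gamma_real_pos[OF a] Gamma_real_pos[OF b]
      less_imp_neq[OF Gamma_real_pos[OF a]] less_imp_neq[OF Gamma_real_pos[OF b]]
    by (simp add: K_def Beta_def powr_add field_simps)
  ultimately show ?thesis by (simp add: S_def)
qed

theorem theorem8:
  fixes cls :: "'t::finite \<Rightarrow> 'c"
    and I \<nu> p :: "'t \<Rightarrow> real"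
    and \<beta> :: real
    and bb :: "'t \<times> 't \<Rightarrow> 't \<times> 't \<Rightarrow> real"
    and bu :: "'t \<Rightarrow> 't \<Rightarrow> real"
  assumes nu_pos: "\<And>v. \<nu> v > 0"
    and nu_class: "\<And>v w. cls v = cls w \<Longrightarrow> \<nu> v = \<nu> w"
    and beta_pos: "\<beta> > 0"
    and p_pos: "\<And>v. p v > 0"
    and bin_db: "\<And>v w v' w'. p v * p w * bb (v, w) (v', w') = p v' * p w' * bb (v', w') (v, w)"
    and un_class: "\<And>v w. bu v w \<noteq> 0 \<Longrightarrow> cls v = cls w"
    and un_db: "\<And>v w. p v * bu v w = p w * bu w v"
    and bin_nu: "\<And>v w v' w'. bb (v, w) (v', w') \<noteq> 0 \<Longrightarrow> \<nu> v + \<nu> w = \<nu> v' + \<nu> w'"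
  shows "(\<forall>v w v' w' U. bb (v, w) (v', w') \<noteq> 0 \<longrightarrow> U > max (Ipair I (v, w)) (Ipair I (v', w')) \<longrightarrow>
            piw \<beta> I \<nu> p v * piw \<beta> I \<nu> p w * fpair \<beta> I \<nu> (v, w) U * abin I \<nu> bb (v, w) (v', w') U
          = piw \<beta> I \<nu> p v' * piw \<beta> I \<nu> p w' * fpair \<beta> I \<nu> (v', w') U * abin I \<nu> bb (v', w') (v, w) U)
       \<and> (\<forall>v w U. bu v w \<noteq> 0 \<longrightarrow> cls v = cls w \<longrightarrow> U > max (I v) (I w) \<longrightarrow>
            piw \<beta> I \<nu> p v * fdens \<beta> I \<nu> v U * aun I \<nu> bu v w U
          = piw \<beta> I \<nu> p w * fdens \<beta> I \<nu> w U * aun I \<nu> bu w v U)"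
  proof (intro conjI allI impI)
  fix v w v' w' U
  assume bnz: "bb (v, w) (v', w') \<noteq> 0" and U: "U > max (Ipair I (v, w)) (Ipair I (v', w'))"
  have nu: "\<nu> v + \<nu> w = \<nu> v' + \<nu> w'" using bin_nu[OF bnz] .
  have U1: "U > I v + I w" and U2: "U > I v' + I w'" using U by (auto simp: Ipair_def)
  note c1 = conv[OF nu_pos[of v] nu_pos[of w] beta_pos U1] and c2 = conv[OF nu_pos[of v'] nu_pos[of w'] beta_pos U2]
  define n where "n = \<nu> v + \<nu> w"
  define S1 where "S1 = U - (I v + I w)"
  define S2 where "S2 = U - (I v' + I w')"
  have bp: "\<beta> powr (- \<nu> v) * \<beta> powr (- \<nu> w) * \<beta> powr n = 1"
    using beta_pos by (simp add: n_def powr_add[symmetric])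
  have bp': "\<beta> powr (- \<nu> v') * \<beta> powr (- \<nu> w') * \<beta> powr n = 1"
    using beta_pos by (simp add: n_def nu powr_add[symmetric])
  have e1: "exp (- \<beta> * I v) * exp (- \<beta> * I w) * exp (- \<beta> * S1) = exp (- \<beta> * U)"
    by (simp add: S1_def exp_add[symmetric] algebra_simps)
  have e2: "exp (- \<beta> * I v') * exp (- \<beta> * I w') * exp (- \<beta> * S2) = exp (- \<beta> * U)"
    by (simp add: S2_def exp_add[symmetric] algebra_simps)
  have L: "piw \<beta> I \<nu> p v * piw \<beta> I \<nu> p w * fpair \<beta> I \<nu> (v, w) U * abin I \<nu> bb (v, w) (v', w') U
     = (p v * p w * bb (v, w) (v', w')) * (exp (- \<beta> * I v) * exp (- \<beta> * I w) * exp (- \<beta> * S1))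
       * (\<beta> powr (- \<nu> v) * \<beta> powr (- \<nu> w) * \<beta> powr n) / Gamma n * S1 powr (n - 1) * S2 powr (n - 1)"
    using U2 unfolding c1 piw_def abin_def Ipair_def nupair_def fst_conv snd_conv nu[symmetric] n_def[symmetric] S1_def[symmetric] S2_def[symmetric]
    by (simp add: algebra_simps)
  have R: "piw \<beta> I \<nu> p v' * piw \<beta> I \<nu> p w' * fpair \<beta> I \<nu> (v', w') U * abin I \<nu> bb (v', w') (v, w) U
     = (p v' * p w' * bb (v', w') (v, w)) * (exp (- \<beta> * I v') * exp (- \<beta> * I w') * exp (- \<beta> * S2))
       * (\<beta> powr (- \<nu> v') * \<beta> powr (- \<nu> w') * \<beta> powr n) / Gamma n * S2 powr (n - 1) * S1 powr (n - 1)"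
    using U1 unfolding c2 piw_def abin_def Ipair_def nupair_def fst_conv snd_conv nu[symmetric] n_def[symmetric] S1_def[symmetric] S2_def[symmetric]
    by (simp add: algebra_simps)
  show "piw \<beta> I \<nu> p v * piw \<beta> I \<nu> p w * fpair \<beta> I \<nu> (v, w) U * abin I \<nu> bb (v, w) (v', w') U
     = piw \<beta> I \<nu> p v' * piw \<beta> I \<nu> p w' * fpair \<beta> I \<nu> (v', w') U * abin I \<nu> bb (v', w') (v, w) U"
    unfolding L R e1 e2 bp bp' bin_db by simp
next
  fix v w U
  assume bnz: "bu v w \<noteq> 0" and cl: "cls v = cls w" and U: "U > max (I v) (I w)"
  have nu: "\<nu> w = \<nu> v" using nu_class[OF cl] by simp
  have bp: "\<beta> powr (- \<nu> v) * \<beta> powr (\<nu> v) = 1"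
    using beta_pos by (simp add: powr_add[symmetric])
  have e1: "exp (- \<beta> * I v) * exp (- \<beta> * (U - I v)) = exp (- \<beta> * U)"
    by (simp add: exp_add[symmetric] algebra_simps)
  have e2: "exp (- \<beta> * I w) * exp (- \<beta> * (U - I w)) = exp (- \<beta> * U)"
    by (simp add: exp_add[symmetric] algebra_simps)
  have L: "piw \<beta> I \<nu> p v * fdens \<beta> I \<nu> v U * aun I \<nu> bu v w U =
     (p v * bu v w) * (exp (- \<beta> * I v) * exp (- \<beta> * (U - I v))) * (\<beta> powr (- \<nu> v) * \<beta> powr (\<nu> v))
      / Gamma (\<nu> v) * (U - I v) powr (\<nu> v - 1) * (U - I w) powr (\<nu> v - 1)"
    using U by (simp add: piw_def fdens_def aun_def nu)
  have R: "piw \<beta> I \<nu> p w * fdens \<beta> I \<nu> w U * aun I \<nu> bu w v U =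
     (p w * bu w v) * (exp (- \<beta> * I w) * exp (- \<beta> * (U - I w))) * (\<beta> powr (- \<nu> v) * \<beta> powr (\<nu> v))
      / Gamma (\<nu> v) * (U - I w) powr (\<nu> v - 1) * (U - I v) powr (\<nu> v - 1)"
    using U by (simp add: piw_def fdens_def aun_def nu)
  show "piw \<beta> I \<nu> p v * fdens \<beta> I \<nu> v U * aun I \<nu> bu v w U =
        piw \<beta> I \<nu> p w * fdens \<beta> I \<nu> w U * aun I \<nu> bu w v U"
    unfolding L R e1 e2 bp un_db by simp
qed

end
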